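(* Let $\Sigma$ be a finite set, $I\subseteq\Sigma\times\Sigma$ a symmetric irreflexive relation, $M=M(\Sigma,I)$, $\Sigma_0\subseteq\Sigma$, $I_0=(\Sigma_0\times\Sigma_0)\cap I$ and $M_0=M(\Sigma_0,I_0)\subseteq M$. Let $B\subseteq M$ consist of the identity $1$ together with all elements $t\in M\setminus\{1\}$ such that the first factor $w_1$ of the Foata normal form $t=w_1w_2\cdots w_n$ contains only letters of $\Sigma\setminus\Sigma_0$. Then every $w\in M$ can be written as $w=au$ with $a\in M_0$ and $u\in B$, and this decomposition is unique: if $au=bv$ with $a,b\in M_0$, $u,v\in B$, then $a=b$ and $u=v$. Consequently $B$ is a basis of $\mathbb{Z}M$ as a free left $\mathbb{Z}M_0$-module.
   Context: For a finite alphabet $\Sigma$ and a symmetric irreflexive relation $I\subseteq \Sigma\times\Sigma$, the free partially commutative monoid $M(\Sigma,I)$ is the monoid with presentation $\langle \Sigma \mid ab=ba \text{ for all } (a,b)\in I\rangle$; $M(\Sigma_0,I_0)$ is identified with its (injective) canonical image in $M$. Let $D=(\Sigma\times\Sigma)\setminus I$. Fix a total order on $\Sigma$. An element $x\in M(\Sigma,I)$ is written in Foata normal form if either it is the empty word or $x=x_1x_2\cdots x_n$ with $n>0$ and nonempty words $x_i$ such that: each $x_i$ is a product of distinct pairwise commuting letters written in increasing order; and for each $1\le i<n$ and each letter $a$ of $x_{i+1}$ there is a letter $b$ of $x_i$ with $(a,b)\in D$. Every element of $M(\Sigma,I)$ has a unique Foata normal form. *)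

theory Defs
  imports Main
begin

(* Free partially commutative (trace) monoid M(Sigma, I), realised as the set of
   equivalence classes of words over Sigma modulo the congruence generated by
   ab = ba for (a,b) in I. *)

definition swap_step :: "('a \<times> 'a) set \<Rightarrow> 'a list \<Rightarrow> 'a list \<Rightarrow> bool" where
  "swap_step I u v \<longleftrightarrow>
     (\<exists>xs ys a b. (a, b) \<in> I \<and> u = xs @ [a, b] @ ys \<and> v = xs @ [b, a] @ ys)"

definition trace_equiv :: "('a \<times> 'a) set \<Rightarrow> 'a list \<Rightarrow> 'a list \<Rightarrow> bool" where
  "trace_equiv I = (sup (swap_step I) (swap_step I)\<inverse>\<inverse>)\<^sup>*\<^sup>*"

definition trace_of :: "('a \<times> 'a) set \<Rightarrow> 'a list \<Rightarrow> 'a list set" where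
  "trace_of I w = {v. trace_equiv I w v}"

definition trace_monoid :: "'a set \<Rightarrow> ('a \<times> 'a) set \<Rightarrow> 'a list set set" where
  "trace_monoid \<Sigma> I = trace_of I ` lists \<Sigma>"

definition tone :: "('a \<times> 'a) set \<Rightarrow> 'a list set" where
  "tone I = trace_of I []"

definition tmult :: "('a \<times> 'a) set \<Rightarrow> 'a list set \<Rightarrow> 'a list set \<Rightarrow> 'a list set" where
  "tmult I s t = trace_of I ((SOME u. u \<in> s) @ (SOME v. v \<in> t))"

definition tembed :: "('a \<times> 'a) set \<Rightarrow> 'a list set \<Rightarrow> 'a list set" where
  "tembed I s = trace_of I (SOME u. u \<in> s)"

definition is_foata_nf ::
  "'a::linorder set \<Rightarrow> ('a \<times> 'a) set \<Rightarrow> 'a list set \<Rightarrow> 'a list list \<Rightarrow> bool" where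
  "is_foata_nf \<Sigma> I t fs \<longleftrightarrow>
     (\<forall>x \<in> set fs. x \<noteq> [] \<and> set x \<subseteq> \<Sigma> \<and> sorted_wrt (<) x \<and>
        (\<forall>a \<in> set x. \<forall>b \<in> set x. a \<noteq> b \<longrightarrow> (a, b) \<in> I)) \<and>
     (\<forall>i. Suc i < length fs \<longrightarrow>
        (\<forall>a \<in> set (fs ! Suc i). \<exists>b \<in> set (fs ! i). (a, b) \<in> (\<Sigma> \<times> \<Sigma>) - I)) \<and>
     trace_of I (concat fs) = t"

definition fsupp :: "('b \<Rightarrow> int) \<Rightarrow> 'b set" where
  "fsupp f = {t. f t \<noteq> 0}"

definition monoid_ring :: "'b set \<Rightarrow> ('b \<Rightarrow> int) set" where
  "monoid_ring S = {f. finite (fsupp f) \<and> fsupp f \<subseteq> S}"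

definition mr_mult :: "('a \<times> 'a) set \<Rightarrow> ('a list set \<Rightarrow> int) \<Rightarrow> ('a list set \<Rightarrow> int)
                        \<Rightarrow> ('a list set \<Rightarrow> int)" where
  "mr_mult I x y = (\<lambda>t. \<Sum>(p, q) \<in> {(p, q). p \<in> fsupp x \<and> q \<in> fsupp y \<and> tmult I p q = t}.
                         x p * y q)"

definition mr_delta :: "'b \<Rightarrow> ('b \<Rightarrow> int)" where
  "mr_delta u = (\<lambda>t. if t = u then 1 else 0)"

definition is_free_left_basis ::
  "('a \<times> 'a) set \<Rightarrow> 'a list set set \<Rightarrow> 'a list set set \<Rightarrow> 'a list set set \<Rightarrow> bool" where
  "is_free_left_basis I M M0 B \<longleftrightarrow> B \<subseteq> M \<and>
     (\<forall>f \<in> monoid_ring M. \<exists>!c.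
        (\<forall>u. c u \<in> monoid_ring M0) \<and>
        (\<forall>u. u \<notin> B \<longrightarrow> c u = (\<lambda>_. 0)) \<and>
        finite {u. c u \<noteq> (\<lambda>_. 0)} \<and>
        f = (\<lambda>t. \<Sum>u \<in> {u. c u \<noteq> (\<lambda>_. 0)}. mr_mult I (c u) (mr_delta u) t))"

end

theory Submission
  imports Defs
begin


lemma te_induct:
  assumes "trace_equiv I u v" "P u"
    "\<And>x y. swap_step I x y \<Longrightarrow> P x \<Longrightarrow> P y"
    "\<And>x y. swap_step I y x \<Longrightarrow> P x \<Longrightarrow> P y"
  shows "P v"
  using assms(1,2) unfolding trace_equiv_def
proof (induction rule: rtranclp_induct)
  case base then show ?case by simp
next
  case (step y z) then show ?case using assms(3,4) by auto
qed

lemma te_refl[simp]: "trace_equiv I w w"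
  unfolding trace_equiv_def by simp

lemma te_trans: "trace_equiv I u v \<Longrightarrow> trace_equiv I v w \<Longrightarrow> trace_equiv I u w"
  unfolding trace_equiv_def by (rule rtranclp_trans)

lemma te_sym: "trace_equiv I u v \<Longrightarrow> trace_equiv I v u"
proof (erule te_induct[where P="\<lambda>v. trace_equiv I v u"])
  show "trace_equiv I u u" by simp
next
  fix x y assume "swap_step I x y" "trace_equiv I x u"
  then show "trace_equiv I y u" unfolding trace_equiv_def
    by (meson converse_rtranclp_into_rtranclp conversepI sup2I2)
next
  fix x y assume "swap_step I y x" "trace_equiv I x u"
  then show "trace_equiv I y u" unfolding trace_equiv_def
    by (meson converse_rtranclp_into_rtranclp sup2I1)
qed

lemma te_step1: "swap_step I x y \<Longrightarrow> trace_equiv I x y"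
  unfolding trace_equiv_def by auto

lemma swap_step_app: "swap_step I u v \<Longrightarrow> swap_step I (xs@u@ys) (xs@v@ys)"
  unfolding swap_step_def
  by (metis append.assoc)

lemma te_app: "trace_equiv I u v \<Longrightarrow> trace_equiv I (xs@u@ys) (xs@v@ys)"
proof (erule te_induct[where P="\<lambda>v. trace_equiv I (xs@u@ys) (xs@v@ys)"])
  show "trace_equiv I (xs@u@ys) (xs@u@ys)" by simp
next
  fix x y assume "swap_step I x y" "trace_equiv I (xs@u@ys) (xs@x@ys)"
  then show "trace_equiv I (xs@u@ys) (xs@y@ys)"
    using te_step1[OF swap_step_app] te_trans by blast
next
  fix x y assume "swap_step I y x" "trace_equiv I (xs@u@ys) (xs@x@ys)"
  then show "trace_equiv I (xs@u@ys) (xs@y@ys)"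
    using te_step1[OF swap_step_app] te_trans te_sym by blast
qed

lemma te_cons: "trace_equiv I u v \<Longrightarrow> trace_equiv I (x#u) (x#v)"
  using te_app[of I u v "[x]" "[]"] by simp

lemma te_appL: "trace_equiv I u v \<Longrightarrow> trace_equiv I (xs@u) (xs@v)"
  using te_app[of I u v xs "[]"] by simp

lemma te_appR: "trace_equiv I u v \<Longrightarrow> trace_equiv I (u@ys) (v@ys)"
  using te_app[of I u v "[]" ys] by simp

lemma swap_step_intro: "(a,b) \<in> I \<Longrightarrow> swap_step I (xs@a#b#ys) (xs@b#a#ys)"
  unfolding swap_step_def
  by (rule exI[of _ xs], rule exI[of _ ys], rule exI[of _ a], rule exI[of _ b]) simp

lemma te_swap: "(a,b) \<in> I \<Longrightarrow> trace_equiv I (xs@a#b#ys) (xs@b#a#ys)"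
  by (rule te_step1[OF swap_step_intro])

lemma swap_step_set: "swap_step I x y \<Longrightarrow> set x = set y \<and> length x = length y"
  unfolding swap_step_def by auto

lemma te_set_length: "trace_equiv I u v \<Longrightarrow> set u = set v \<and> length u = length v"
  by (erule te_induct[where P="\<lambda>v. set u = set v \<and> length u = length v"])
     (auto dest: swap_step_set)

lemma te_set: "trace_equiv I u v \<Longrightarrow> set u = set v"
  using te_set_length by blast

lemma te_length: "trace_equiv I u v \<Longrightarrow> length u = length v"
  using te_set_length by blast

lemma swap_step_mono: "I \<subseteq> J \<Longrightarrow> swap_step I x y \<Longrightarrow> swap_step J x y"
  unfolding swap_step_def by blast

lemma te_mono: "I \<subseteq> J \<Longrightarrow> trace_equiv I u v \<Longrightarrow> trace_equiv J u v"
proof (erule te_induct[where P="\<lambda>v. trace_equiv J u v"])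
  assume IJ: "I \<subseteq> J"
  show "trace_equiv J u u" by simp
  fix x y assume "swap_step I x y" "trace_equiv J u x"
  then show "trace_equiv J u y" by (meson IJ te_trans te_step1 swap_step_mono)
next
  assume IJ: "I \<subseteq> J"
  fix x y assume "swap_step I y x" "trace_equiv J u x"
  then show "trace_equiv J u y" by (meson IJ te_trans te_sym te_step1 swap_step_mono)
qed

lemma move_left:
  assumes "sym I" "\<forall>c\<in>set s. (x,c)\<in>I"
  shows "trace_equiv I (s @ x # t) (x # s @ t)"
  using assms(2)
proof (induction s)
  case Nil then show ?case by simp
next
  case (Cons c s)
  then have h1: "trace_equiv I (c # s @ x # t) (c # x # s @ t)" by (simp add: te_cons)
  have "(c,x) \<in> I" using Cons.prems assms(1) by (auto dest: symD)
  then have h2: "trace_equiv I (c # x # s @ t) (x # c # s @ t)" using te_swap[of c x I "[]"] by simp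
  show ?case using te_trans[OF h1 h2] by simp
qed


definition QQ where
  "QQ I x p w \<longleftrightarrow> x \<in> set w \<and> (\<forall>c\<in>set (takeWhile (\<lambda>y. y\<noteq>x) w). (x,c)\<in>I)
      \<and> trace_equiv I p (remove1 x w)"

lemma QQ_step:
  assumes "irrefl I" "swap_step I u v" "QQ I x p u"
  shows "QQ I x p v"
proof -
  obtain xs ys a b where ab: "(a,b)\<in>I" "u = xs @ [a, b] @ ys" "v = xs @ [b, a] @ ys"
    using assms(2) unfolding swap_step_def by blast
  have ne: "a \<noteq> b" using ab(1) assms(1) by (auto simp: irrefl_def)
  have sv: "set v = set u" using ab by auto
  have Q: "x \<in> set u" "\<forall>c\<in>set (takeWhile (\<lambda>y. y\<noteq>x) u). (x,c)\<in>I"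
      "trace_equiv I p (remove1 x u)" using assms(3) unfolding QQ_def by auto
  show ?thesis
  proof (cases "x \<in> set xs")
    case True
    have t1: "takeWhile (\<lambda>y. y\<noteq>x) u = takeWhile (\<lambda>y. y\<noteq>x) xs"
     and t2: "takeWhile (\<lambda>y. y\<noteq>x) v = takeWhile (\<lambda>y. y\<noteq>x) xs"
      using True ab by (auto intro: takeWhile_append1)
    have r1: "remove1 x u = remove1 x xs @ a # b # ys" "remove1 x v = remove1 x xs @ b # a # ys"
      using True ab by (auto simp: remove1_append)
    have "trace_equiv I p (remove1 x v)" using Q(3) r1 te_trans te_swap[OF ab(1)] by metis
    then show ?thesis using Q sv t1 t2 unfolding QQ_def by auto
  next
    case F: False
    have tw: "\<And>L. takeWhile (\<lambda>y. y\<noteq>x) (xs @ L) = xs @ takeWhile (\<lambda>y. y\<noteq>x) L"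
      by (rule takeWhile_append2) (use F in auto)
    show ?thesis
    proof (cases "a = x")
      case True
      have t1: "takeWhile (\<lambda>y. y\<noteq>x) u = xs" "takeWhile (\<lambda>y. y\<noteq>x) v = xs @ [b]"
        using True ne ab by (auto simp: tw)
      have r1: "remove1 x u = xs @ b # ys" "remove1 x v = xs @ b # ys"
        using True F ne ab by (auto simp: remove1_append)
      show ?thesis using Q sv t1 r1 True ab(1) unfolding QQ_def by auto
    next
      case F2: False
      show ?thesis
      proof (cases "b = x")
        case True
        have t1: "takeWhile (\<lambda>y. y\<noteq>x) u = xs @ [a]" "takeWhile (\<lambda>y. y\<noteq>x) v = xs"
          using True F F2 ab by (auto simp: tw)
        have r1: "remove1 x u = xs @ a # ys" "remove1 x v = xs @ a # ys"
          using True F F2 ab by (auto simp: remove1_append)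
        show ?thesis using Q sv t1 r1 unfolding QQ_def by auto
      next
        case False
        have t1: "takeWhile (\<lambda>y. y\<noteq>x) u = xs @ a # b # takeWhile (\<lambda>y. y\<noteq>x) ys"
            "takeWhile (\<lambda>y. y\<noteq>x) v = xs @ b # a # takeWhile (\<lambda>y. y\<noteq>x) ys"
          using False F F2 ab by (auto simp: tw)
        have r1: "remove1 x u = xs @ a # b # remove1 x ys" "remove1 x v = xs @ b # a # remove1 x ys"
          using False F F2 ab by (auto simp: remove1_append)
        have "trace_equiv I p (remove1 x v)" using Q(3) r1 te_trans te_swap[OF ab(1)] by metis
        then show ?thesis using Q sv t1 r1 unfolding QQ_def by auto
      qed
    qed
  qed
qed



lemma swap_step_sym: "sym I \<Longrightarrow> swap_step I y x \<Longrightarrow> swap_step I x y"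
  unfolding swap_step_def by (blast dest: symD)

lemma C_fwd:
  assumes "sym I" "irrefl I" "trace_equiv I (x#p) w"
  shows "QQ I x p w"
proof (rule te_induct[where P="QQ I x p", OF assms(3)])
  show "QQ I x p (x#p)" unfolding QQ_def by simp
next
  fix u v assume "swap_step I u v" "QQ I x p u"
  then show "QQ I x p v" by (rule QQ_step[OF assms(2)])
next
  fix u v assume "swap_step I v u" "QQ I x p u"
  then show "QQ I x p v" by (rule QQ_step[OF assms(2) swap_step_sym[OF assms(1)]])
qed

lemma C_bwd:
  assumes "sym I" "QQ I x p w"
  shows "trace_equiv I (x#p) w"
proof -
  have xw: "x \<in> set w" using assms(2) unfolding QQ_def by auto
  obtain s t where st: "w = s @ x # t" "x \<notin> set s" using split_list_first[OF xw] by blast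
  have tw: "takeWhile (\<lambda>y. y\<noteq>x) w = s"
    unfolding st(1) by (subst takeWhile_append2) (use st(2) in auto)
  have rw: "remove1 x w = s @ t" using st by (simp add: remove1_append)
  have com: "\<forall>c\<in>set s. (x,c)\<in>I" and pe: "trace_equiv I p (s@t)"
    using assms(2) tw rw unfolding QQ_def by auto
  have "trace_equiv I (x#p) (x#s@t)" using te_cons[OF pe] .
  moreover have "trace_equiv I (x#s@t) w" using te_sym[OF move_left[OF assms(1) com]] st by simp
  ultimately show ?thesis by (rule te_trans)
qed

lemma te_cancel:
  assumes "sym I" "irrefl I" "trace_equiv I (x#p) (x#q)"
  shows "trace_equiv I p q"
  using C_fwd[OF assms] unfolding QQ_def by simp

lemma te_L2:
  assumes "sym I" "irrefl I" "trace_equiv I (x#p) (y#q)" "x \<noteq> y"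
  shows "(x,y) \<in> I \<and> (\<exists>r. trace_equiv I p (y#r) \<and> trace_equiv I q (x#r))"
proof -
  have Q: "QQ I x p (y#q)" using C_fwd[OF assms(1-3)] .
  then have xq: "x \<in> set q" and xy: "(x,y)\<in>I"
    and c: "\<forall>c\<in>set (takeWhile (\<lambda>z. z\<noteq>x) q). (x,c)\<in>I"
    and pe: "trace_equiv I p (y # remove1 x q)"
    using assms(4) unfolding QQ_def by auto
  have "QQ I x (remove1 x q) q" using xq c unfolding QQ_def by simp
  then have "trace_equiv I (x # remove1 x q) q" using C_bwd[OF assms(1)] by blast
  then show ?thesis using xy pe te_sym by blast
qed

lemma te_L3:
  assumes "sym I" "irrefl I"
  shows "trace_equiv I (s@t) (x#p) \<Longrightarrow>
    (\<exists>s'. trace_equiv I s (x#s')) \<or> (\<exists>t'. trace_equiv I t (x#t'))"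
proof (induction s arbitrary: p)
  case Nil then show ?case by auto
next
  case (Cons y s)
  show ?case
  proof (cases "y = x")
    case True then show ?thesis using te_refl by blast
  next
    case False
    from te_L2[OF assms Cons.prems[simplified] False]
    obtain r where yx: "(y,x)\<in>I" and r: "trace_equiv I (s@t) (x#r)" by blast
    from Cons.IH[OF r] show ?thesis
    proof
      assume "\<exists>s'. trace_equiv I s (x#s')"
      then obtain s' where s': "trace_equiv I s (x#s')" by blast
      have "trace_equiv I (y#s) (y#x#s')" using te_cons[OF s'] .
      moreover have "trace_equiv I (y#x#s') (x#y#s')" using te_swap[OF yx, of "[]"] by simp
      ultimately show ?thesis using te_trans by blast
    qed auto
  qed
qed

lemma te_front:
  assumes "sym I" "irrefl I"
  shows "distinct ys \<Longrightarrow> \<forall>y\<in>set ys. \<exists>q. trace_equiv I w (y#q) \<Longrightarrow>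
     \<exists>w'. trace_equiv I w (ys @ w')"
proof (induction ys arbitrary: w)
  case Nil then show ?case by (intro exI[of _ w]) simp
next
  case (Cons y ys)
  obtain q where q: "trace_equiv I w (y#q)" using Cons.prems by auto
  have hq: "\<forall>z\<in>set ys. \<exists>r. trace_equiv I q (z#r)"
  proof
    fix z assume z: "z \<in> set ys"
    then have zy: "z \<noteq> y" using Cons.prems by auto
    obtain q' where q': "trace_equiv I w (z#q')" using Cons.prems z by auto
    have "trace_equiv I (y#q) (z#q')" using te_trans[OF te_sym[OF q] q'] .
    then show "\<exists>r. trace_equiv I q (z#r)" using te_L2[OF assms] zy by metis
  qed
  then obtain w' where "trace_equiv I q (ys @ w')" using Cons.IH[of q] Cons.prems hq by auto
  then have "trace_equiv I w ((y#ys) @ w')" using te_trans[OF q te_cons] by simp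
  then show ?case by blast
qed

lemma min_commute:
  assumes "sym I" "irrefl I" "trace_equiv I w (y#q)" "trace_equiv I w (z#r)" "y \<noteq> z"
  shows "(y,z) \<in> I"
  using te_L2[OF assms(1,2) te_trans[OF te_sym[OF assms(3)] assms(4)] assms(5)] by blast



lemma trace_of_eq: "trace_of I u = trace_of I v \<longleftrightarrow> trace_equiv I u v"
proof
  assume "trace_of I u = trace_of I v"
  then have "v \<in> trace_of I u" unfolding trace_of_def by (metis mem_Collect_eq te_refl)
  then show "trace_equiv I u v" unfolding trace_of_def by simp
next
  assume h: "trace_equiv I u v"
  show "trace_of I u = trace_of I v" unfolding trace_of_def
    using h te_trans te_sym by blast
qed

lemma foata_exists:
  assumes IS: "I \<subseteq> \<Sigma> \<times> \<Sigma>" and sy: "sym I" and ir: "irrefl I"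
  shows "w \<in> lists \<Sigma> \<Longrightarrow> \<exists>fs. is_foata_nf \<Sigma> I (trace_of I w) fs \<and>
            (\<forall>y\<in>set (concat (take 1 fs)). \<exists>q. trace_equiv I w (y#q))"
proof (induction "length w" arbitrary: w rule: less_induct)
  case less
  show ?case
  proof (cases "w = []")
    case True
    then show ?thesis by (intro exI[of _ "[]"]) (simp add: is_foata_nf_def)
  next
    case False
    define F where "F = {y. \<exists>q. trace_equiv I w (y#q)}"
    have FS: "F \<subseteq> set w" unfolding F_def using te_set by fastforce
    have Ffin: "finite F" using finite_subset[OF FS] by simp
    have Fne: "hd w \<in> F" unfolding F_def using False
      by (metis list.collapse mem_Collect_eq te_refl)
    define f where "f = sorted_list_of_set F"
    have sf: "set f = F" "distinct f" "sorted_wrt (<) f" using Ffin unfolding f_def by auto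
    have fne: "f \<noteq> []" using sf(1) Fne by auto
    obtain w' where w': "trace_equiv I w (f @ w')"
      using te_front[OF sy ir sf(2), of w] sf(1) unfolding F_def by auto
    have lw: "length w' < length w" using te_length[OF w'] fne by simp
    have sw: "set w = set f \<union> set w'" using te_set[OF w'] by simp
    have w'S: "w' \<in> lists \<Sigma>" using less.prems sw by auto
    have fS: "set f \<subseteq> \<Sigma>" using less.prems sw by auto
    obtain fs' where fs': "is_foata_nf \<Sigma> I (trace_of I w') fs'"
      and mn: "\<forall>y\<in>set (concat (take 1 fs')). \<exists>q. trace_equiv I w' (y#q)"
      using less.hyps[OF lw w'S] by blast
    have fac: "\<forall>x\<in>set fs'. x \<noteq> [] \<and> set x \<subseteq> \<Sigma> \<and> sorted_wrt (<) x \<and>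
        (\<forall>a\<in>set x. \<forall>b\<in>set x. a \<noteq> b \<longrightarrow> (a, b) \<in> I)"
      and dep: "\<forall>i. Suc i < length fs' \<longrightarrow>
        (\<forall>a\<in>set (fs' ! Suc i). \<exists>b\<in>set (fs' ! i). (a, b) \<in> \<Sigma> \<times> \<Sigma> - I)"
      and tr: "trace_of I (concat fs') = trace_of I w'"
      using fs' unfolding is_foata_nf_def by auto
    have fpair: "\<forall>a\<in>set f. \<forall>b\<in>set f. a \<noteq> b \<longrightarrow> (a, b) \<in> I"
      using sf(1) min_commute[OF sy ir] unfolding F_def by blast
    have dep0: "\<forall>a\<in>set (fs' ! 0). \<exists>b\<in>set f. (a, b) \<in> \<Sigma> \<times> \<Sigma> - I" if "0 < length fs'"
    proof
      fix a assume a: "a \<in> set (fs' ! 0)"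
      have a1: "a \<in> set (concat (take 1 fs'))" using a that by (cases fs') auto
      have aS: "a \<in> \<Sigma>" using a that fac by (metis nth_mem subsetD)
      obtain q where q: "trace_equiv I w' (a#q)" using mn a1 by blast
      show "\<exists>b\<in>set f. (a, b) \<in> \<Sigma> \<times> \<Sigma> - I"
      proof (cases "a \<in> set f")
        case True
        then show ?thesis using aS ir by (auto simp: irrefl_def)
      next
        case False
        show ?thesis
        proof (rule ccontr)
          assume "\<not> ?thesis"
          then have com: "\<forall>c\<in>set f. (a,c) \<in> I" using aS fS by auto
          have "trace_equiv I w (f @ a # q)" using te_trans[OF w' te_appL[OF q]] .
          moreover have "trace_equiv I (f @ a # q) (a # f @ q)" by (rule move_left[OF sy com])
          ultimately have "a \<in> F" unfolding F_def using te_trans by blast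
          then show False using False sf(1) by simp
        qed
      qed
    qed
    have foata: "is_foata_nf \<Sigma> I (trace_of I w) (f # fs')"
      unfolding is_foata_nf_def
    proof (intro conjI)
      show "\<forall>x\<in>set (f # fs'). x \<noteq> [] \<and> set x \<subseteq> \<Sigma> \<and> sorted_wrt (<) x \<and>
        (\<forall>a\<in>set x. \<forall>b\<in>set x. a \<noteq> b \<longrightarrow> (a, b) \<in> I)"
        using fac fne fS sf(3) fpair by auto
      show "\<forall>i. Suc i < length (f # fs') \<longrightarrow>
        (\<forall>a\<in>set ((f # fs') ! Suc i). \<exists>b\<in>set ((f # fs') ! i). (a, b) \<in> \<Sigma> \<times> \<Sigma> - I)"
      proof (intro allI impI)
        fix i assume i: "Suc i < length (f # fs')"
        show "\<forall>a\<in>set ((f # fs') ! Suc i). \<exists>b\<in>set ((f # fs') ! i). (a, b) \<in> \<Sigma> \<times> \<Sigma> - I"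
        proof (cases i)
          case 0 then show ?thesis using dep0 i by simp
        next
          case (Suc j) then show ?thesis using dep i by simp
        qed
      qed
      have "trace_equiv I (concat fs') w'" using tr trace_of_eq by blast
      then have "trace_equiv I (f @ concat fs') w" using te_trans[OF te_appL te_sym[OF w']] by blast
      then show "trace_of I (concat (f # fs')) = trace_of I w" by (simp add: trace_of_eq)
    qed
    moreover have "\<forall>y\<in>set (concat (take 1 (f # fs'))). \<exists>q. trace_equiv I w (y#q)"
      using sf(1) unfolding F_def by simp
    ultimately show ?thesis by blast
  qed
qed

lemma foata_head:
  assumes sy: "sym I" and ir: "irrefl I" and fo: "is_foata_nf \<Sigma> I t fs"
    and e: "trace_equiv I (concat fs) (x#p)"
  shows "fs \<noteq> [] \<and> x \<in> set (hd fs)"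
proof -
  have Q: "QQ I x p (concat fs)" using C_fwd[OF sy ir te_sym[OF e]] .
  then have xin: "x \<in> set (concat fs)"
    and com: "\<forall>c\<in>set (takeWhile (\<lambda>y. y\<noteq>x) (concat fs)). (x,c)\<in>I"
    unfolding QQ_def by auto
  define P where "P i \<longleftrightarrow> i < length fs \<and> x \<in> set (fs ! i)" for i
  have exP: "\<exists>i. P i"
  proof -
    obtain y where y: "y \<in> set fs" "x \<in> set y" using xin by auto
    then obtain i where "i < length fs" "fs ! i = y" by (auto simp: in_set_conv_nth)
    then show ?thesis using y unfolding P_def by blast
  qed
  define i0 where "i0 = (LEAST i. P i)"
  have Pi0: "P i0" unfolding i0_def using LeastI_ex[OF exP] .
  have notk: "\<not> P k" if "k < i0" for k using not_less_Least[of k P] that unfolding i0_def by blast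
  have fsne: "fs \<noteq> []" using Pi0 unfolding P_def by auto
  show ?thesis
  proof (cases i0)
    case 0
    then show ?thesis using Pi0 fsne unfolding P_def by (simp add: hd_conv_nth)
  next
    case (Suc j)
    have dep: "\<forall>a\<in>set (fs ! Suc j). \<exists>b\<in>set (fs ! j). (a, b) \<in> \<Sigma> \<times> \<Sigma> - I"
      using fo Pi0 Suc unfolding is_foata_nf_def P_def by blast
    obtain b where b: "b \<in> set (fs ! j)" "(x,b) \<notin> I" using dep Pi0 Suc unfolding P_def by blast
    have xnot: "x \<notin> set (concat (take i0 fs))"
    proof
      assume "x \<in> set (concat (take i0 fs))"
      then obtain y where y: "y \<in> set (take i0 fs)" "x \<in> set y" by auto
      then obtain k where k: "k < length (take i0 fs)" "take i0 fs ! k = y"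
        by (auto simp: in_set_conv_nth)
      then have "P k" "k < i0" using y unfolding P_def by auto
      then show False using notk by blast
    qed
    have cc: "concat fs = concat (take i0 fs) @ concat (drop i0 fs)"
      by (simp flip: concat_append)
    have tw: "takeWhile (\<lambda>y. y\<noteq>x) (concat fs) =
        concat (take i0 fs) @ takeWhile (\<lambda>y. y\<noteq>x) (concat (drop i0 fs))"
      unfolding cc by (rule takeWhile_append2) (use xnot in auto)
    have jl: "j < length (take i0 fs)" using Pi0 Suc unfolding P_def by simp
    have "take i0 fs ! j \<in> set (take i0 fs)" by (rule nth_mem[OF jl])
    then have "fs ! j \<in> set (take i0 fs)" using Suc by simp
    then have "b \<in> set (takeWhile (\<lambda>y. y\<noteq>x) (concat fs))" using tw b(1) by auto
    then show ?thesis using com b(2) by blast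
  qed
qed

definition Good where
  "Good \<Sigma>0 I u \<longleftrightarrow> (\<forall>x\<in>\<Sigma>0. \<forall>q. \<not> trace_equiv I u (x#q))"

lemma decomp_exists:
  assumes "\<Sigma>0 \<subseteq> \<Sigma>"
  shows "w \<in> lists \<Sigma> \<Longrightarrow> \<exists>a u. a \<in> lists \<Sigma>0 \<and> u \<in> lists \<Sigma> \<and> Good \<Sigma>0 I u \<and> trace_equiv I w (a@u)"
proof (induction "length w" arbitrary: w rule: less_induct)
  case less
  show ?case
  proof (cases "Good \<Sigma>0 I w")
    case True
    then show ?thesis using less.prems by (intro exI[of _ "[]"] exI[of _ w]) simp
  next
    case False
    then obtain x q where xq: "x \<in> \<Sigma>0" "trace_equiv I w (x#q)" unfolding Good_def by blast
    have lq: "length q < length w" using te_length[OF xq(2)] by simp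
    have qS: "q \<in> lists \<Sigma>" using te_set[OF xq(2)] less.prems by auto
    obtain a u where au: "a \<in> lists \<Sigma>0" "u \<in> lists \<Sigma>" "Good \<Sigma>0 I u" "trace_equiv I q (a@u)"
      using less.hyps[OF lq qS] by blast
    have "trace_equiv I w ((x#a)@u)" using te_trans[OF xq(2) te_cons[OF au(4)]] by simp
    then show ?thesis using au xq(1) by (intro exI[of _ "x#a"] exI[of _ u]) simp
  qed
qed

lemma decomp_unique:
  assumes sy: "sym I" and ir: "irrefl I"
  shows "a \<in> lists \<Sigma>0 \<Longrightarrow> b \<in> lists \<Sigma>0 \<Longrightarrow> Good \<Sigma>0 I u \<Longrightarrow> Good \<Sigma>0 I v \<Longrightarrow>
     trace_equiv I (a@u) (b@v) \<Longrightarrow> trace_equiv I a b \<and> trace_equiv I u v"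
proof (induction a arbitrary: b)
  case Nil
  show ?case
  proof (cases b)
    case Nil then show ?thesis using Nil.prems by simp
  next
    case (Cons y b')
    then have "y \<in> \<Sigma>0" "trace_equiv I u (y # (b'@v))" using Nil.prems by auto
    then show ?thesis using Nil.prems(3) unfolding Good_def by blast
  qed
next
  case (Cons x a)
  have e: "trace_equiv I (b@v) (x#(a@u))" using te_sym[OF Cons.prems(5)] by simp
  have x0: "x \<in> \<Sigma>0" using Cons.prems(1) by simp
  have "\<not> (\<exists>v'. trace_equiv I v (x#v'))" using Cons.prems(4) x0 unfolding Good_def by blast
  then obtain b' where b': "trace_equiv I b (x#b')" using te_L3[OF sy ir e] by blast
  have b'S: "b' \<in> lists \<Sigma>0" using te_set[OF b'] Cons.prems(2) by auto
  have "trace_equiv I (x#(a@u)) (x#(b'@v))"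
    using te_trans[OF Cons.prems(5)[simplified] te_appR[OF b', of v]] by simp
  then have "trace_equiv I (a@u) (b'@v)" by (rule te_cancel[OF sy ir])
  then have "trace_equiv I a b' \<and> trace_equiv I u v"
    using Cons.IH[OF _ b'S Cons.prems(3,4)] Cons.prems(1) by simp
  then show ?case using te_trans[OF te_cons te_sym[OF b']] by blast
qed

lemma B_char:
  assumes IS: "I \<subseteq> \<Sigma> \<times> \<Sigma>" and sy: "sym I" and ir: "irrefl I" and uS: "u \<in> lists \<Sigma>"
  shows "(trace_of I u = tone I \<or> (trace_of I u \<noteq> tone I \<and>
           (\<exists>fs. is_foata_nf \<Sigma> I (trace_of I u) fs \<and> set (hd fs) \<subseteq> \<Sigma> - \<Sigma>0)))
         \<longleftrightarrow> Good \<Sigma>0 I u"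
proof
  assume h: "trace_of I u = tone I \<or> (trace_of I u \<noteq> tone I \<and>
           (\<exists>fs. is_foata_nf \<Sigma> I (trace_of I u) fs \<and> set (hd fs) \<subseteq> \<Sigma> - \<Sigma>0))"
  show "Good \<Sigma>0 I u"
    unfolding Good_def
  proof (intro ballI allI notI)
    fix x q assume x: "x \<in> \<Sigma>0" and e: "trace_equiv I u (x#q)"
    show False
    proof (cases "trace_of I u = tone I")
      case True
      then have "trace_equiv I u []" unfolding tone_def using trace_of_eq by blast
      then show False using te_length[OF e] te_length by fastforce
    next
      case False
      then obtain fs where fs: "is_foata_nf \<Sigma> I (trace_of I u) fs" "set (hd fs) \<subseteq> \<Sigma> - \<Sigma>0"
        using h by blast
      have "trace_of I (concat fs) = trace_of I u" using fs(1) unfolding is_foata_nf_def by blast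
      then have "trace_equiv I (concat fs) (x#q)" using trace_of_eq te_trans e by blast
      then have "x \<in> set (hd fs)" using foata_head[OF sy ir fs(1)] by blast
      then show False using fs(2) x by blast
    qed
  qed
next
  assume g: "Good \<Sigma>0 I u"
  show "trace_of I u = tone I \<or> (trace_of I u \<noteq> tone I \<and>
           (\<exists>fs. is_foata_nf \<Sigma> I (trace_of I u) fs \<and> set (hd fs) \<subseteq> \<Sigma> - \<Sigma>0))"
  proof (cases "trace_of I u = tone I")
    case True then show ?thesis by simp
  next
    case False
    obtain fs where fs: "is_foata_nf \<Sigma> I (trace_of I u) fs"
      and mn: "\<forall>y\<in>set (concat (take 1 fs)). \<exists>q. trace_equiv I u (y#q)"
      using foata_exists[OF IS sy ir uS] by blast
    have fsne: "fs \<noteq> []"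
    proof
      assume "fs = []"
      then have "trace_of I [] = trace_of I u" using fs unfolding is_foata_nf_def by simp
      then show False using False unfolding tone_def by simp
    qed
    have hd1: "set (hd fs) = set (concat (take 1 fs))" using fsne by (cases fs) auto
    have "set (hd fs) \<subseteq> \<Sigma>" using fs fsne unfolding is_foata_nf_def by simp
    moreover have "set (hd fs) \<inter> \<Sigma>0 = {}" using mn hd1 g unfolding Good_def by blast
    ultimately show ?thesis using False fs by blast
  qed
qed

lemma tmult_trace: "tmult I (trace_of I a) (trace_of I b) = trace_of I (a@b)"
proof -
  have ea: "trace_equiv I a (SOME u. u \<in> trace_of I a)"
    using someI[of "\<lambda>u. u \<in> trace_of I a" a] unfolding trace_of_def by simp
  have eb: "trace_equiv I b (SOME u. u \<in> trace_of I b)"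
    using someI[of "\<lambda>u. u \<in> trace_of I b" b] unfolding trace_of_def by simp
  have "trace_equiv I (a@b) ((SOME u. u \<in> trace_of I a) @ (SOME u. u \<in> trace_of I b))"
    using te_trans[OF te_appR[OF ea] te_appL[OF eb]] .
  then show ?thesis unfolding tmult_def using trace_of_eq by metis
qed

lemma tembed_trace: "I0 \<subseteq> I \<Longrightarrow> tembed I (trace_of I0 a) = trace_of I a"
proof -
  assume h: "I0 \<subseteq> I"
  have ea: "trace_equiv I0 a (SOME u. u \<in> trace_of I0 a)"
    using someI[of "\<lambda>u. u \<in> trace_of I0 a" a] unfolding trace_of_def by simp
  then show ?thesis unfolding tembed_def using trace_of_eq te_mono[OF h] by metis
qed



lemma fsupp_delta: "fsupp (mr_delta u) = {u}"
  unfolding fsupp_def mr_delta_def by auto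

lemma mr_mult_delta:
  "mr_mult I x (mr_delta u) t = (\<Sum>p\<in>{p\<in>fsupp x. tmult I p u = t}. x p)"
proof -
  have S: "{(p, q). p \<in> fsupp x \<and> q \<in> fsupp (mr_delta u) \<and> tmult I p q = t}
        = (\<lambda>p. (p,u)) ` {p\<in>fsupp x. tmult I p u = t}"
    unfolding fsupp_delta by auto
  have inj: "inj_on (\<lambda>p. (p,u)) {p\<in>fsupp x. tmult I p u = t}" by (auto simp: inj_on_def)
  show ?thesis unfolding mr_mult_def S sum.reindex[OF inj]
    by (simp add: mr_delta_def)
qed

locale decomp =
  fixes I :: "('a \<times> 'a) set" and M M0 B :: "'a list set set"
  assumes BM: "B \<subseteq> M"
    and ex: "\<forall>w\<in>M. \<exists>a\<in>M0. \<exists>u\<in>B. w = tmult I a u"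
    and un: "\<forall>a\<in>M0. \<forall>b\<in>M0. \<forall>u\<in>B. \<forall>v\<in>B. tmult I a u = tmult I b v \<longrightarrow> a = b \<and> u = v"
    and cl: "\<forall>a\<in>M0. \<forall>u\<in>B. tmult I a u \<in> M"
begin

definition good_c where
  "good_c c \<longleftrightarrow> (\<forall>u. c u \<in> monoid_ring M0) \<and> (\<forall>u. u \<notin> B \<longrightarrow> c u = (\<lambda>_. 0)) \<and>
     finite {u. c u \<noteq> (\<lambda>_. 0)}"

lemma sum_eval:
  assumes g: "good_c c" and p: "p \<in> M0" and u: "u \<in> B"
  shows "(\<Sum>u'\<in>{u. c u \<noteq> (\<lambda>_. 0)}. mr_mult I (c u') (mr_delta u') (tmult I p u)) = c u p"
proof -
  let ?U = "{u. c u \<noteq> (\<lambda>_. 0)}"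
  have each: "mr_mult I (c u') (mr_delta u') (tmult I p u) = (if u' = u then c u p else 0)"
    if u': "u' \<in> ?U" for u'
  proof -
    have u'B: "u' \<in> B" using u' g unfolding good_c_def by auto
    have sub: "fsupp (c u') \<subseteq> M0" using g unfolding good_c_def monoid_ring_def by auto
    have S: "{p'\<in>fsupp (c u'). tmult I p' u' = tmult I p u} = (if u' = u \<and> p \<in> fsupp (c u) then {p} else {})"
      using un sub p u u'B by auto
    show ?thesis unfolding mr_mult_delta S
      by (auto simp: fsupp_def)
  qed
  have "(\<Sum>u'\<in>?U. mr_mult I (c u') (mr_delta u') (tmult I p u)) =
        (\<Sum>u'\<in>?U. (if u' = u then c u p else 0))"
    using each by (rule sum.cong[OF refl])
  also have "\<dots> = (if u \<in> ?U then c u p else 0)"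
    using g unfolding good_c_def by (simp add: sum.delta')
  also have "\<dots> = c u p" by auto
  finally show ?thesis .
qed

lemma sum_out:
  assumes g: "good_c c" and t: "t \<notin> M"
  shows "(\<Sum>u'\<in>{u. c u \<noteq> (\<lambda>_. 0)}. mr_mult I (c u') (mr_delta u') t) = 0"
proof (rule sum.neutral, rule ballI)
  fix u' assume u': "u' \<in> {u. c u \<noteq> (\<lambda>_. 0)}"
  have u'B: "u' \<in> B" using u' g unfolding good_c_def by auto
  have sub: "fsupp (c u') \<subseteq> M0" using g unfolding good_c_def monoid_ring_def by auto
  have e: "{p\<in>fsupp (c u'). tmult I p u' = t} = {}" using cl sub u'B t by auto
  show "mr_mult I (c u') (mr_delta u') t = 0" unfolding mr_mult_delta e by simp
qed

lemma free: "is_free_left_basis I M M0 B"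
  unfolding is_free_left_basis_def
proof (intro conjI BM ballI)
  fix f assume f: "f \<in> monoid_ring M"
  have ff: "finite (fsupp f)" and fM: "fsupp f \<subseteq> M" using f unfolding monoid_ring_def by auto
  define c where "c u = (\<lambda>p. if u \<in> B \<and> p \<in> M0 then f (tmult I p u) else 0)" for u
  have c1: "c u \<in> monoid_ring M0" for u
  proof (cases "u \<in> B")
    case False then show ?thesis unfolding c_def monoid_ring_def fsupp_def by simp
  next
    case True
    have sub: "fsupp (c u) \<subseteq> {p\<in>M0. tmult I p u \<in> fsupp f}"
      unfolding c_def fsupp_def by auto
    have inj: "inj_on (\<lambda>p. tmult I p u) {p\<in>M0. tmult I p u \<in> fsupp f}"
      using un True by (auto simp: inj_on_def)
    have "(\<lambda>p. tmult I p u) ` {p\<in>M0. tmult I p u \<in> fsupp f} \<subseteq> fsupp f" by auto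
    then have "finite {p\<in>M0. tmult I p u \<in> fsupp f}"
      using finite_imageD[OF finite_subset[OF _ ff] inj] by blast
    then have "finite (fsupp (c u))" using sub finite_subset by blast
    moreover have "fsupp (c u) \<subseteq> M0" unfolding c_def fsupp_def by auto
    ultimately show ?thesis unfolding monoid_ring_def by blast
  qed
  have c2: "u \<notin> B \<Longrightarrow> c u = (\<lambda>_. 0)" for u unfolding c_def by simp
  define sel where "sel t = (SOME u. u \<in> B \<and> (\<exists>p\<in>M0. tmult I p u = t))" for t
  have c3: "finite {u. c u \<noteq> (\<lambda>_. 0)}"
  proof (rule finite_subset[OF _ finite_imageI[OF ff, of sel]])
    show "{u. c u \<noteq> (\<lambda>_. 0)} \<subseteq> sel ` fsupp f"
    proof
      fix u assume "u \<in> {u. c u \<noteq> (\<lambda>_. 0)}"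
      then obtain p where "c u p \<noteq> 0" by auto
      then have uB: "u \<in> B" and pM: "p \<in> M0" and ft: "f (tmult I p u) \<noteq> 0"
        unfolding c_def by (auto split: if_splits)
      let ?t = "tmult I p u"
      have "\<exists>u'. u' \<in> B \<and> (\<exists>p'\<in>M0. tmult I p' u' = ?t)" using uB pM by blast
      then have s: "sel ?t \<in> B \<and> (\<exists>p'\<in>M0. tmult I p' (sel ?t) = ?t)"
        unfolding sel_def by (rule someI_ex)
      then obtain p' where p': "sel ?t \<in> B" "p' \<in> M0" "tmult I p' (sel ?t) = ?t" by blast
      have "p' = p \<and> sel ?t = u" using un p' uB pM by blast
      then have "sel ?t = u" by blast
      moreover have "?t \<in> fsupp f" using ft unfolding fsupp_def by simp
      ultimately show "u \<in> sel ` fsupp f" by (metis image_eqI)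
    qed
  qed
  have gc: "good_c c" unfolding good_c_def using c1 c2 c3 by blast
  have feq: "f = (\<lambda>t. \<Sum>u \<in> {u. c u \<noteq> (\<lambda>_. 0)}. mr_mult I (c u) (mr_delta u) t)"
  proof
    fix t
    show "f t = (\<Sum>u \<in> {u. c u \<noteq> (\<lambda>_. 0)}. mr_mult I (c u) (mr_delta u) t)"
    proof (cases "t \<in> M")
      case True
      then obtain a u where a: "a \<in> M0" "u \<in> B" "t = tmult I a u" using ex by blast
      show ?thesis using sum_eval[OF gc a(1,2)] a unfolding c_def by simp
    next
      case False
      then have "f t = 0" using fM unfolding fsupp_def by auto
      then show ?thesis using sum_out[OF gc False] by simp
    qed
  qed
  show "\<exists>!c. (\<forall>u. c u \<in> monoid_ring M0) \<and>
          (\<forall>u. u \<notin> B \<longrightarrow> c u = (\<lambda>_. 0)) \<and>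
          finite {u. c u \<noteq> (\<lambda>_. 0)} \<and>
          f = (\<lambda>t. \<Sum>u\<in>{u. c u \<noteq> (\<lambda>_. 0)}. mr_mult I (c u) (mr_delta u) t)"
  proof (rule ex1I[of _ c])
    show "(\<forall>u. c u \<in> monoid_ring M0) \<and>
          (\<forall>u. u \<notin> B \<longrightarrow> c u = (\<lambda>_. 0)) \<and>
          finite {u. c u \<noteq> (\<lambda>_. 0)} \<and>
          f = (\<lambda>t. \<Sum>u\<in>{u. c u \<noteq> (\<lambda>_. 0)}. mr_mult I (c u) (mr_delta u) t)"
      using c1 c2 c3 feq by blast
  next
    fix c' assume h: "(\<forall>u. c' u \<in> monoid_ring M0) \<and>
          (\<forall>u. u \<notin> B \<longrightarrow> c' u = (\<lambda>_. 0)) \<and>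
          finite {u. c' u \<noteq> (\<lambda>_. 0)} \<and>
          f = (\<lambda>t. \<Sum>u\<in>{u. c' u \<noteq> (\<lambda>_. 0)}. mr_mult I (c' u) (mr_delta u) t)"
    then have gc': "good_c c'" unfolding good_c_def by blast
    have fe: "f = (\<lambda>t. \<Sum>u\<in>{u. c' u \<noteq> (\<lambda>_. 0)}. mr_mult I (c' u) (mr_delta u) t)"
      using h by blast
    show "c' = c"
    proof (intro ext)
      fix u p
      show "c' u p = c u p"
      proof (cases "u \<in> B \<and> p \<in> M0")
        case True
        have "c u p = f (tmult I p u)" unfolding c_def using True by simp
        also have "\<dots> = (\<Sum>u'\<in>{u. c' u \<noteq> (\<lambda>_. 0)}. mr_mult I (c' u') (mr_delta u') (tmult I p u))"
          using fun_cong[OF fe, of "tmult I p u"] by simp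
        also have "\<dots> = c' u p" using sum_eval[OF gc'] True by blast
        finally show ?thesis by simp
      next
        case False
        have "c u p = 0" unfolding c_def using False by auto
        moreover have "c' u p = 0"
        proof (cases "u \<in> B")
          case True
          then have "p \<notin> M0" using False by blast
          moreover have "fsupp (c' u) \<subseteq> M0" using h unfolding monoid_ring_def by blast
          ultimately show ?thesis unfolding fsupp_def by auto
        next
          case False then show ?thesis using h by simp
        qed
        ultimately show ?thesis by simp
      qed
    qed
  qed
qed

end



theorem mainTheorem3:
  fixes \<Sigma> \<Sigma>0 :: "'a::linorder set" and I :: "('a \<times> 'a) set"
  assumes "finite \<Sigma>" and "I \<subseteq> \<Sigma> \<times> \<Sigma>" and "sym I" and "irrefl I"
    and "\<Sigma>0 \<subseteq> \<Sigma>"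
  defines "M \<equiv> trace_monoid \<Sigma> I"
    and "I0 \<equiv> (\<Sigma>0 \<times> \<Sigma>0) \<inter> I"
  defines "M0 \<equiv> tembed I ` trace_monoid \<Sigma>0 I0"
    and "B \<equiv> {t \<in> M. t = tone I \<or>
                 (t \<noteq> tone I \<and> (\<exists>fs. is_foata_nf \<Sigma> I t fs \<and> set (hd fs) \<subseteq> \<Sigma> - \<Sigma>0))}"
  shows "(\<forall>w \<in> M. \<exists>a \<in> M0. \<exists>u \<in> B. w = tmult I a u)
       \<and> (\<forall>a \<in> M0. \<forall>b \<in> M0. \<forall>u \<in> B. \<forall>v \<in> B.
            tmult I a u = tmult I b v \<longrightarrow> a = b \<and> u = v)
       \<and> is_free_left_basis I M M0 B"
proof -
  note IS = assms(2) and sy = assms(3) and ir = assms(4) and S0 = assms(5)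
  have I0I: "I0 \<subseteq> I" unfolding I0_def by blast
  have Meq: "M = trace_of I ` lists \<Sigma>" unfolding M_def trace_monoid_def ..
  have M0eq: "M0 = trace_of I ` lists \<Sigma>0"
    unfolding M0_def trace_monoid_def image_image tembed_trace[OF I0I] ..
  have Bmem: "t \<in> B \<longleftrightarrow> (\<exists>u\<in>lists \<Sigma>. Good \<Sigma>0 I u \<and> t = trace_of I u)" for t
  proof
    assume t: "t \<in> B"
    then obtain u where u: "u \<in> lists \<Sigma>" "t = trace_of I u" unfolding B_def Meq by blast
    then have "Good \<Sigma>0 I u" using t B_char[OF IS sy ir u(1), of \<Sigma>0] unfolding B_def by blast
    then show "\<exists>u\<in>lists \<Sigma>. Good \<Sigma>0 I u \<and> t = trace_of I u" using u by blast
  next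
    assume "\<exists>u\<in>lists \<Sigma>. Good \<Sigma>0 I u \<and> t = trace_of I u"
    then obtain u where u: "u \<in> lists \<Sigma>" "Good \<Sigma>0 I u" "t = trace_of I u" by blast
    then show "t \<in> B" using B_char[OF IS sy ir u(1), of \<Sigma>0] unfolding B_def Meq by blast
  qed
  have BM: "B \<subseteq> M" unfolding B_def by blast
  have ex: "\<forall>w\<in>M. \<exists>a\<in>M0. \<exists>u\<in>B. w = tmult I a u"
  proof
    fix w assume "w \<in> M"
    then obtain v where v: "v \<in> lists \<Sigma>" "w = trace_of I v" unfolding Meq by blast
    obtain a u where au: "a \<in> lists \<Sigma>0" "u \<in> lists \<Sigma>" "Good \<Sigma>0 I u" "trace_equiv I v (a@u)"
      using decomp_exists[OF S0 v(1)] by blast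
    have "trace_of I a \<in> M0" using au(1) unfolding M0eq by blast
    moreover have "trace_of I u \<in> B" using au(2,3) Bmem by blast
    moreover have "w = tmult I (trace_of I a) (trace_of I u)"
      unfolding tmult_trace v(2) trace_of_eq by (rule au(4))
    ultimately show "\<exists>a\<in>M0. \<exists>u\<in>B. w = tmult I a u" by blast
  qed
  have un: "\<forall>a\<in>M0. \<forall>b\<in>M0. \<forall>u\<in>B. \<forall>v\<in>B. tmult I a u = tmult I b v \<longrightarrow> a = b \<and> u = v"
  proof (intro ballI impI)
    fix a b u v assume a: "a \<in> M0" and b: "b \<in> M0" and u: "u \<in> B" and v: "v \<in> B"
      and e: "tmult I a u = tmult I b v"
    obtain a0 where a0: "a0 \<in> lists \<Sigma>0" "a = trace_of I a0" using a unfolding M0eq by blast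
    obtain b0 where b0: "b0 \<in> lists \<Sigma>0" "b = trace_of I b0" using b unfolding M0eq by blast
    obtain u0 where u0: "Good \<Sigma>0 I u0" "u = trace_of I u0" using u Bmem by blast
    obtain v0 where v0: "Good \<Sigma>0 I v0" "v = trace_of I v0" using v Bmem by blast
    have "trace_equiv I (a0@u0) (b0@v0)" using e unfolding a0(2) b0(2) u0(2) v0(2) tmult_trace trace_of_eq .
    then have "trace_equiv I a0 b0 \<and> trace_equiv I u0 v0"
      using decomp_unique[OF sy ir a0(1) b0(1) u0(1) v0(1)] by blast
    then show "a = b \<and> u = v" unfolding a0(2) b0(2) u0(2) v0(2) trace_of_eq .
  qed
  have cl: "\<forall>a\<in>M0. \<forall>u\<in>B. tmult I a u \<in> M"
  proof (intro ballI)
    fix a u assume a: "a \<in> M0" and u: "u \<in> B"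
    obtain a0 where a0: "a0 \<in> lists \<Sigma>0" "a = trace_of I a0" using a unfolding M0eq by blast
    obtain u0 where u0: "u0 \<in> lists \<Sigma>" "u = trace_of I u0" using u Bmem by blast
    have "a0 @ u0 \<in> lists \<Sigma>" using a0(1) u0(1) S0 by auto
    then show "tmult I a u \<in> M" unfolding a0(2) u0(2) tmult_trace Meq by blast
  qed
  interpret decomp I M M0 B using BM ex un cl by unfold_locales
  show ?thesis using ex un free by blast
qed


end
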